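(* Let $L$ be a Lévy process with triplet $(b,\sigma^2,\mu)$, $b=0$, and $X$ the solution of $dX_t=-aX_t\,dt+dL_t$, observed on the scheme described in the context. Write $L=\sigma W+J$ with $W$ a standard Brownian motion and $J$ an independent pure-jump Lévy process, and let $D_t=-a\int_0^tX_s\,ds$. Suppose $\sup_{s\ge0}E[|X_s|^l]<\infty$ for some $l\ge1$. Then for every $\delta\in(0,1/2)$ and $i\in\{1,\dots,n-1\}$, $$P\big(|\Delta_iW+\Delta_iD|>\Delta_n^{1/2-\delta}\big)=O\big(\Delta_n^{l(1/2+\delta)}\big)\quad\text{as }n\to\infty.$$
   Context: $X_0$ is independent of $L$. Observation scheme: for each $n$, times $0=t_0<t_1<\dots<t_n=T_n$ with $T_n\to\infty$, $\Delta_n=\max_i(t_{i+1}-t_i)\downarrow0$ and $n\Delta_nT_n^{-1}=O(1)$. For a process $Y$, $\Delta_iY=Y_{t_{i+1}}-Y_{t_i}$. *)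

theory Defs
  imports "HOL-Probability.Probability"
begin

definition mesh :: "(nat \<Rightarrow> nat \<Rightarrow> real) \<Rightarrow> nat \<Rightarrow> real" where
  "mesh tt n = Max {tt n (Suc i) - tt n i | i. i < n}"

definition obs_scheme :: "(nat \<Rightarrow> nat \<Rightarrow> real) \<Rightarrow> bool" where
  "obs_scheme tt \<longleftrightarrow>
     (\<forall>n. tt n 0 = 0) \<and>
     (\<forall>n. \<forall>i<n. tt n i < tt n (Suc i)) \<and>
     filterlim (\<lambda>n. tt n n) at_top sequentially \<and>
     (\<forall>n\<ge>1. mesh tt (Suc n) \<le> mesh tt n) \<and>
     (mesh tt \<longlonglongrightarrow> 0) \<and>
     (\<exists>C. \<forall>\<^sub>F n in sequentially. real n * mesh tt n / tt n n \<le> C)"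

definition cadlag :: "(real \<Rightarrow> real) \<Rightarrow> bool" where
  "cadlag f \<longleftrightarrow> (\<forall>t\<ge>0. continuous (at_right t) f \<and> (t > 0 \<longrightarrow> (\<exists>l. (f \<longlongrightarrow> l) (at_left t))))"

definition indep_increments :: "'w measure \<Rightarrow> (real \<Rightarrow> 'w \<Rightarrow> real) \<Rightarrow> bool" where
  "indep_increments M Z \<longleftrightarrow>
     (\<forall>(s::nat \<Rightarrow> real) k. 0 \<le> s 0 \<and> (\<forall>j<k. s j < s (Suc j)) \<longrightarrow>
        prob_space.indep_vars M (\<lambda>_. borel) (\<lambda>j \<omega>. Z (s (Suc j)) \<omega> - Z (s j) \<omega>) {..<k})"

definition brownian_motion :: "'w measure \<Rightarrow> (real \<Rightarrow> 'w \<Rightarrow> real) \<Rightarrow> bool" where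
  "brownian_motion M W \<longleftrightarrow>
     (\<forall>t. W t \<in> borel_measurable M) \<and>
     (AE \<omega> in M. W 0 \<omega> = 0) \<and>
     (AE \<omega> in M. continuous_on {0..} (\<lambda>t. W t \<omega>)) \<and>
     indep_increments M W \<and>
     (\<forall>s t. 0 \<le> s \<and> s < t \<longrightarrow>
        distributed M lborel (\<lambda>\<omega>. W t \<omega> - W s \<omega>) (normal_density 0 (sqrt (t - s))))"

definition levy_process :: "'w measure \<Rightarrow> (real \<Rightarrow> 'w \<Rightarrow> real) \<Rightarrow> bool" where
  "levy_process M Z \<longleftrightarrow>
     (\<forall>t. Z t \<in> borel_measurable M) \<and>
     (AE \<omega> in M. Z 0 \<omega> = 0) \<and>
     (AE \<omega> in M. cadlag (\<lambda>t. Z t \<omega>)) \<and>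
     indep_increments M Z \<and>
     (\<forall>s t. 0 \<le> s \<and> s \<le> t \<longrightarrow>
        distr M borel (\<lambda>\<omega>. Z t \<omega> - Z s \<omega>) = distr M borel (Z (t - s)))"

definition levy_measure :: "real measure \<Rightarrow> bool" where
  "levy_measure \<mu> \<longleftrightarrow> sets \<mu> = sets borel \<and> emeasure \<mu> {0} = 0 \<and>
     integrable \<mu> (\<lambda>x. min 1 (x\<^sup>2))"

definition levy_triplet :: "'w measure \<Rightarrow> (real \<Rightarrow> 'w \<Rightarrow> real) \<Rightarrow> real \<Rightarrow> real \<Rightarrow> real measure \<Rightarrow> bool" where
  "levy_triplet M Z b c \<mu> \<longleftrightarrow> levy_measure \<mu> \<and> c \<ge> 0 \<and>
     (\<forall>t\<ge>0. \<forall>u. char (distr M borel (Z t)) u =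
        exp (complex_of_real t *
          (\<i> * complex_of_real (b * u) - complex_of_real (c * u\<^sup>2 / 2)
           + (CLINT x|\<mu>. iexp (u * x) - 1 - \<i> * complex_of_real (u * x * indicator {-1..1} x)))))"

end

theory Submission
  imports Defs
begin


lemma powr_tangent:
  fixes m y l :: real
  assumes m: "0 < m" and y: "0 \<le> y" and l: "1 \<le> l"
  shows "m powr l + l * m powr (l - 1) * (y - m) \<le> y powr l"
proof (cases "y = 0")
  case True
  have "m powr (l - 1) * m = m powr l" using m by (simp add: powr_diff)
  then have "m powr l + l * m powr (l - 1) * (y - m) = (1 - l) * m powr l"
    using True by (simp add: algebra_simps)
  also have "\<dots> \<le> 0" using l by (simp add: mult_nonpos_nonneg)
  finally show ?thesis using True by simp
next
  case False
  then have yp: "0 < y" using y by simp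
  have "(\<lambda>x. l * x powr (l - 1)) m * (y - m) \<le> y powr l - m powr l"
  proof (rule f''_imp_f'[where C="{0<..}" and f="\<lambda>x. x powr l" and f''="\<lambda>x. l * (l - 1) * x powr (l - 2)"])
    show "convex {0::real<..}" by simp
    show "\<And>x. x \<in> {0<..} \<Longrightarrow> ((\<lambda>x. x powr l) has_real_derivative l * x powr (l - 1)) (at x)"
      by (auto intro!: derivative_eq_intros)
    show "\<And>x. x \<in> {0<..} \<Longrightarrow> ((\<lambda>x. l * x powr (l - 1)) has_real_derivative l * (l - 1) * x powr (l - 2)) (at x)"
      by (auto intro!: derivative_eq_intros simp: algebra_simps)
    show "\<And>x. x \<in> {0<..} \<Longrightarrow> 0 \<le> l * (l - 1) * x powr (l - 2)" using l by simp
  qed (use m yp in auto)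
  then show ?thesis by simp
qed

lemma jensen_hk:
  fixes g :: "real \<Rightarrow> real" and a b l :: real
  assumes gi: "g integrable_on {a..b}" and gli: "(\<lambda>s. g s powr l) integrable_on {a..b}"
    and g0: "\<And>s. s \<in> {a..b} \<Longrightarrow> 0 \<le> g s" and ab: "a < b" and l: "1 \<le> l"
  shows "(integral {a..b} g) powr l \<le> (b - a) powr (l - 1) * integral {a..b} (\<lambda>s. g s powr l)"
proof -
  define h where "h = b - a"
  have h: "0 < h" using ab by (simp add: h_def)
  define I where "I = integral {a..b} g"
  have I0: "0 \<le> I" unfolding I_def using gi g0 by (rule integral_nonneg)
  have J0: "0 \<le> integral {a..b} (\<lambda>s. g s powr l)" using gli by (rule integral_nonneg) simp
  show ?thesis
  proof (cases "I = 0")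
    case True
    then show ?thesis using J0 h l by (simp add: I_def h_def)
  next
    case False
    define m where "m = I / h"
    have m: "0 < m" using False I0 h by (simp add: m_def)
    have tan: "\<And>s. s \<in> {a..b} \<Longrightarrow> m powr l + l * m powr (l - 1) * (g s - m) \<le> g s powr l"
      using powr_tangent[OF m g0 l] by blast
    have int1: "(\<lambda>s. m powr l + l * m powr (l - 1) * (g s - m)) integrable_on {a..b}"
    proof -
      have "(\<lambda>x. g x - m) integrable_on {a..b}" by (intro integrable_diff gi integrable_const_ivl)
      then have "(\<lambda>x. l * m powr (l - 1) * (g x - m)) integrable_on {a..b}" by (rule integrable_on_mult_right)
      then show ?thesis by (intro integrable_add integrable_const_ivl)
    qed
    have "integral {a..b} (\<lambda>s. m powr l + l * m powr (l - 1) * (g s - m))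
        = h * m powr l + l * m powr (l - 1) * (I - h * m)"
    proof -
      have gm: "(\<lambda>x. g x - m) integrable_on {a..b}" by (intro integrable_diff gi integrable_const_ivl)
      have "integral {a..b} (\<lambda>s. m powr l + l * m powr (l - 1) * (g s - m))
          = integral {a..b} (\<lambda>s. m powr l) + integral {a..b} (\<lambda>s. l * m powr (l - 1) * (g s - m))"
        by (rule integral_add) (auto intro: integrable_on_mult_right gm)
      also have "integral {a..b} (\<lambda>s. l * m powr (l - 1) * (g s - m)) = l * m powr (l - 1) * integral {a..b} (\<lambda>s. g s - m)"
        by (rule integral_mult_right)
      also have "integral {a..b} (\<lambda>s. g s - m) = I - h * m"
        using integral_diff[OF gi integrable_const_ivl[of m a b]] ab by (simp add: I_def h_def)
      finally show ?thesis using ab by (simp add: h_def)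
    qed
    also have "\<dots> = h * m powr l" using h by (simp add: m_def)
    finally have "h * m powr l \<le> integral {a..b} (\<lambda>s. g s powr l)"
      using integral_le[OF int1 gli tan] by simp
    moreover have "I powr l = h powr (l - 1) * (h * m powr l)"
    proof -
      have "I = h * m" using h by (simp add: m_def)
      then have "I powr l = h powr l * m powr l" using h m by (simp add: powr_mult)
      also have "h powr l = h powr (l - 1) * h" using h by (simp add: powr_diff)
      finally show ?thesis by simp
    qed
    ultimately have "I powr l \<le> h powr (l - 1) * integral {a..b} (\<lambda>s. g s powr l)"
      by (simp add: mult_left_mono)
    then show ?thesis unfolding I_def h_def .
  qed
qed



lemma nn_fin_integrable_on:
  fixes f :: "real \<Rightarrow> real"
  assumes fm[measurable]: "f \<in> borel_measurable borel" and S[measurable]: "S \<in> sets borel"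
    and fin: "(\<integral>\<^sup>+ s. ennreal \<bar>f s\<bar> * indicator S s \<partial>lborel) < \<infinity>"
  shows "f integrable_on S"
proof -
  have "integrable lborel (\<lambda>s. indicator S s * f s)"
  proof (rule integrableI_bounded)
    show "(\<lambda>s. indicator S s * f s) \<in> borel_measurable lborel" by measurable
    have "(\<integral>\<^sup>+ s. ennreal (norm (indicator S s * f s)) \<partial>lborel) = (\<integral>\<^sup>+ s. ennreal \<bar>f s\<bar> * indicator S s \<partial>lborel)"
      by (intro nn_integral_cong) (auto simp: indicator_def)
    then show "(\<integral>\<^sup>+ s. ennreal (norm (indicator S s * f s)) \<partial>lborel) < \<infinity>" using fin by simp
  qed
  from has_integral_integral_lborel[OF this]
  have "(\<lambda>s. indicator S s * f s) integrable_on UNIV" by blast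
  moreover have "(\<lambda>s. indicator S s * f s) = (\<lambda>x. if x \<in> S then f x else 0)"
    by (auto simp: indicator_def)
  ultimately show ?thesis using integrable_restrict_UNIV by metis
qed

lemma path_bound:
  fixes f :: "real \<Rightarrow> real"
  assumes fm[measurable]: "f \<in> borel_measurable borel" and l: "1 \<le> l" and a0: "0 \<le> a" and ab: "a < b"
    and fin: "(\<integral>\<^sup>+ s. ennreal (\<bar>f s\<bar> powr l) * indicator {0..b} s \<partial>lborel) < \<infinity>"
  shows "ennreal (\<bar>integral {0..b} f - integral {0..a} f\<bar> powr l)
     \<le> ennreal ((b - a) powr (l - 1)) * (\<integral>\<^sup>+ s. ennreal (\<bar>f s\<bar> powr l) * indicator {a..b} s \<partial>lborel)"
proof -
  define g where "g s = \<bar>f s\<bar> powr l" for s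
  have gm[measurable]: "g \<in> borel_measurable borel" unfolding g_def by measurable
  have g0: "0 \<le> g s" for s by (simp add: g_def)
  have gi: "g integrable_on {0..b}"
    by (rule nn_fin_integrable_on) (use fin in \<open>simp_all add: g_def\<close>)
  have fle: "\<bar>f s\<bar> \<le> 1 + g s" for s
  proof (cases "\<bar>f s\<bar> \<le> 1")
    case True then show ?thesis using g0[of s] by simp
  next
    case False
    then have "\<bar>f s\<bar> powr 1 \<le> \<bar>f s\<bar> powr l" using l by (intro powr_mono) auto
    then show ?thesis using False by (simp add: g_def)
  qed
  have fin2: "(\<integral>\<^sup>+ s. ennreal \<bar>f s\<bar> * indicator {0..b} s \<partial>lborel) < \<infinity>"
  proof -
    have "(\<integral>\<^sup>+ s. ennreal \<bar>f s\<bar> * indicator {0..b} s \<partial>lborel)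
        \<le> (\<integral>\<^sup>+ s. (ennreal 1 * indicator {0..b} s + ennreal (g s) * indicator {0..b} s) \<partial>lborel)"
    proof (intro nn_integral_mono)
      fix s
      have "ennreal \<bar>f s\<bar> \<le> ennreal (1 + g s)" using fle[of s] by (rule ennreal_leI)
      then show "ennreal \<bar>f s\<bar> * indicator {0..b} s \<le> ennreal 1 * indicator {0..b} s + ennreal (g s) * indicator {0..b} s"
        using g0[of s] by (auto simp: indicator_def ennreal_plus)
    qed
    also have "\<dots> = (\<integral>\<^sup>+ s. ennreal 1 * indicator {0..b} s \<partial>lborel) + (\<integral>\<^sup>+ s. ennreal (g s) * indicator {0..b} s \<partial>lborel)"
      by (rule nn_integral_add) auto
    also have "\<dots> < \<infinity>" using fin ab a0 by (simp add: g_def)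
    finally show ?thesis .
  qed
  have fi: "f integrable_on {0..b}" by (rule nn_fin_integrable_on) (use fin2 in simp_all)
  have afi: "(\<lambda>s. \<bar>f s\<bar>) integrable_on {0..b}" by (rule nn_fin_integrable_on) (use fin2 in simp_all)
  have fiab: "f integrable_on {a..b}" by (rule integrable_on_subinterval[OF fi]) (use a0 in auto)
  have afiab: "(\<lambda>s. \<bar>f s\<bar>) integrable_on {a..b}" by (rule integrable_on_subinterval[OF afi]) (use a0 in auto)
  have giab: "g integrable_on {a..b}" by (rule integrable_on_subinterval[OF gi]) (use a0 in auto)
  have "integral {0..a} f + integral {a..b} f = integral {0..b} f"
    by (rule Henstock_Kurzweil_Integration.integral_combine[OF a0 _ fi]) (use ab in simp)
  then have diff: "integral {0..b} f - integral {0..a} f = integral {a..b} f" by simp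
  have "\<bar>integral {a..b} f\<bar> \<le> integral {a..b} (\<lambda>s. \<bar>f s\<bar>)"
    using integral_norm_bound_integral[OF fiab afiab] by simp
  then have "\<bar>integral {a..b} f\<bar> powr l \<le> (integral {a..b} (\<lambda>s. \<bar>f s\<bar>)) powr l"
    using l by (intro powr_mono2) auto
  also have "\<dots> \<le> (b - a) powr (l - 1) * integral {a..b} g"
    unfolding g_def by (rule jensen_hk[OF afiab _ _ ab l]) (use giab[unfolded g_def[abs_def]] in simp_all)
  finally have main: "\<bar>integral {0..b} f - integral {0..a} f\<bar> powr l \<le> (b - a) powr (l - 1) * integral {a..b} g"
    unfolding diff .
  have hk: "(g has_integral integral {a..b} g) {a..b}" using giab by (rule integrable_integral)
  have "(\<integral>\<^sup>+ s. ennreal (g s) * indicator {a..b} s \<partial>lborel) = ennreal (integral {a..b} g)"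
    by (rule nn_integral_has_integral_lebesgue'[OF _ hk]) (simp add: g0)
  moreover have "integral {a..b} g \<ge> 0" using giab by (rule integral_nonneg) (simp add: g0)
  moreover have "ennreal (\<bar>integral {0..b} f - integral {0..a} f\<bar> powr l)
      \<le> ennreal ((b - a) powr (l - 1) * integral {a..b} g)" using main by (rule ennreal_leI)
  ultimately show ?thesis
    by (simp add: g_def ennreal_mult)
qed



lemma right_cont_seq:
  fixes f :: "real \<Rightarrow> real"
  assumes c: "continuous (at_right t) f" and ge: "\<And>m. t \<le> u m" and lim: "u \<longlonglongrightarrow> t"
  shows "(\<lambda>m. f (u m)) \<longlonglongrightarrow> f t"
proof (rule tendstoI)
  fix e :: real assume e: "0 < e"
  have "(f \<longlongrightarrow> f t) (at_right t)" using c by (simp add: continuous_within)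
  then have "eventually (\<lambda>x. dist (f x) (f t) < e) (at_right t)" using e by (rule tendstoD)
  then obtain b where b: "b > t" and bb: "\<And>y. y > t \<Longrightarrow> y < b \<Longrightarrow> dist (f y) (f t) < e"
    by (auto simp: eventually_at_right_field)
  have "eventually (\<lambda>m. u m < b) sequentially"
    using lim b by (rule order_tendstoD)
  then show "eventually (\<lambda>m. dist (f (u m)) (f t) < e) sequentially"
  proof eventually_elim
    case (elim m)
    show ?case
    proof (cases "u m = t")
      case True then show ?thesis using e by simp
    next
      case False then have "u m > t" using ge[of m] by simp
      then show ?thesis using bb elim by blast
    qed
  qed
qed

lemma joint_meas:
  fixes X :: "real \<Rightarrow> 'w \<Rightarrow> real"
  assumes Xm: "\<forall>t. X t \<in> borel_measurable M" and cad: "\<forall>\<omega>\<in>space M. cadlag (\<lambda>t. X t \<omega>)"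
  shows "(\<lambda>p. X (max 0 (fst p)) (snd p)) \<in> borel_measurable (lborel \<Otimes>\<^sub>M M)"
proof (rule borel_measurable_LIMSEQ_real)
  define q where "q m s = real_of_int \<lceil>s * real (Suc m)\<rceil> / real (Suc m)" for m s
  show "(\<lambda>p. X (max 0 (q m (fst p))) (snd p)) \<in> borel_measurable (lborel \<Otimes>\<^sub>M M)" for m
  proof -
    have "(\<lambda>p. (\<lambda>(i::int) p'. X (max 0 (real_of_int i / real (Suc m))) (snd p')) (\<lceil>fst p * real (Suc m)\<rceil>) p)
       \<in> borel_measurable (lborel \<Otimes>\<^sub>M M)"
      by (rule measurable_compose_countable[OF measurable_compose[OF measurable_snd Xm[rule_format]]]) measurable
    then show ?thesis by (simp add: q_def)
  qed
  fix p :: "real \<times> 'w" assume p: "p \<in> space (lborel \<Otimes>\<^sub>M M)"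
  obtain s \<omega> where ps: "p = (s, \<omega>)" and \<omega>: "\<omega> \<in> space M" using p by (cases p) (auto simp: space_pair_measure)
  have qge: "s \<le> q m s" for m
  proof -
    have "s * real (Suc m) \<le> real_of_int \<lceil>s * real (Suc m)\<rceil>" by (rule le_of_int_ceiling)
    then show ?thesis by (simp add: q_def field_simps)
  qed
  have qle: "q m s \<le> s + inverse (real (Suc m))" for m
  proof -
    have "real_of_int \<lceil>s * real (Suc m)\<rceil> \<le> s * real (Suc m) + 1" by linarith
    then have "q m s \<le> (s * real (Suc m) + 1) / real (Suc m)"
      unfolding q_def by (rule divide_right_mono) simp
    also have "\<dots> = s + inverse (real (Suc m))" by (simp add: field_simps del: of_nat_Suc)
    finally show ?thesis .
  qed
  have "(\<lambda>m. q m s) \<longlonglongrightarrow> s"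
  proof (rule tendsto_sandwich[of "\<lambda>m. s" _ _ "\<lambda>m. s + inverse (real (Suc m))"])
    show "\<forall>\<^sub>F m in sequentially. s \<le> q m s" using qge by simp
    show "\<forall>\<^sub>F m in sequentially. q m s \<le> s + inverse (real (Suc m))" using qle by simp
    show "(\<lambda>m. s + inverse (real (Suc m))) \<longlonglongrightarrow> s"
      using tendsto_add[OF tendsto_const LIMSEQ_inverse_real_of_nat, of s] by simp
  qed simp
  then have lim: "(\<lambda>m. max 0 (q m s)) \<longlonglongrightarrow> max 0 s"
    by (intro tendsto_max tendsto_const)
  have ge: "max 0 s \<le> max 0 (q m s)" for m using qge[of m] by simp
  have "continuous (at_right (max 0 s)) (\<lambda>t. X t \<omega>)"
    using cad \<omega> unfolding cadlag_def by simp
  from right_cont_seq[OF this ge lim]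
  show "(\<lambda>m. X (max 0 (q m (fst p))) (snd p)) \<longlonglongrightarrow> X (max 0 (fst p)) (snd p)"
    by (simp add: ps)
qed



lemma tonelli_bound:
  fixes X :: "real \<Rightarrow> 'w \<Rightarrow> real"
  assumes P: "prob_space M"
    and Xm: "\<forall>t. X t \<in> borel_measurable M" and cad: "\<forall>\<omega>\<in>space M. cadlag (\<lambda>t. X t \<omega>)"
    and a0: "0 \<le> a" and ab: "a \<le> b"
    and K: "\<And>s. 0 \<le> s \<Longrightarrow> (\<integral>\<^sup>+\<omega>. ennreal (\<bar>X s \<omega>\<bar> powr l) \<partial>M) \<le> K"
  shows "(\<lambda>\<omega>. \<integral>\<^sup>+s. ennreal (\<bar>X (max 0 s) \<omega>\<bar> powr l) * indicator {a..b} s \<partial>lborel) \<in> borel_measurable M"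
    and "(\<integral>\<^sup>+\<omega>. (\<integral>\<^sup>+s. ennreal (\<bar>X (max 0 s) \<omega>\<bar> powr l) * indicator {a..b} s \<partial>lborel) \<partial>M) \<le> ennreal (b - a) * K"
proof -
  interpret prob_space M by fact
  interpret PS: pair_sigma_finite lborel M
    by (intro pair_sigma_finite.intro lborel.sigma_finite_measure_axioms sigma_finite_measure_axioms)
  have J: "(\<lambda>p. X (max 0 (fst p)) (snd p)) \<in> borel_measurable (lborel \<Otimes>\<^sub>M M)"
    by (rule joint_meas[OF Xm cad])
  define F where "F = (\<lambda>(s, \<omega>). ennreal (\<bar>X (max 0 s) \<omega>\<bar> powr l) * indicator {a..b} s)"
  have Fm: "F \<in> borel_measurable (lborel \<Otimes>\<^sub>M M)"
    unfolding F_def using J by (simp add: split_beta') measurable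
  have Fm': "(\<lambda>(\<omega>, s). F (s, \<omega>)) \<in> borel_measurable (M \<Otimes>\<^sub>M lborel)"
    using measurable_pair_swap[OF Fm] .
  show "(\<lambda>\<omega>. \<integral>\<^sup>+s. ennreal (\<bar>X (max 0 s) \<omega>\<bar> powr l) * indicator {a..b} s \<partial>lborel) \<in> borel_measurable M"
    using lborel.borel_measurable_nn_integral[OF Fm'] by (simp add: F_def)
  have "(\<integral>\<^sup>+\<omega>. (\<integral>\<^sup>+s. F (s, \<omega>) \<partial>lborel) \<partial>M) = (\<integral>\<^sup>+s. (\<integral>\<^sup>+\<omega>. F (s, \<omega>) \<partial>M) \<partial>lborel)"
    using PS.Fubini[OF Fm] .
  also have "\<dots> \<le> (\<integral>\<^sup>+s. K * indicator {a..b} s \<partial>lborel)"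
  proof (rule nn_integral_mono)
    fix s :: real
    show "(\<integral>\<^sup>+\<omega>. F (s, \<omega>) \<partial>M) \<le> K * indicator {a..b} s"
    proof (cases "s \<in> {a..b}")
      case True
      then have "max 0 s = s" "0 \<le> s" using a0 by auto
      then show ?thesis using True K[of s] by (simp add: F_def)
    next
      case False then show ?thesis by (simp add: F_def)
    qed
  qed
  also have "\<dots> = K * ennreal (b - a)"
    using ab by (simp add: nn_integral_cmult_indicator)
  finally show "(\<integral>\<^sup>+\<omega>. (\<integral>\<^sup>+s. ennreal (\<bar>X (max 0 s) \<omega>\<bar> powr l) * indicator {a..b} s \<partial>lborel) \<partial>M) \<le> ennreal (b - a) * K"
    by (simp add: F_def mult.commute)
qed



lemma cover3:
  assumes "finite_measure M" "A \<subseteq> B1 \<union> B2 \<union> B3" "B1 \<in> sets M" "B2 \<in> sets M" "B3 \<in> sets M"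
  shows "measure M A \<le> measure M B1 + measure M B2 + measure M B3"
proof (cases "A \<in> sets M")
  case True
  interpret finite_measure M by fact
  have "measure M A \<le> measure M (B1 \<union> B2 \<union> B3)"
    using assms True by (intro finite_measure_mono) auto
  also have "\<dots> \<le> measure M (B1 \<union> B2) + measure M B3"
    using assms by (intro measure_Un_le) auto
  also have "measure M (B1 \<union> B2) \<le> measure M B1 + measure M B2"
    using assms by (intro measure_Un_le) auto
  finally show ?thesis by simp
next
  case False
  then show ?thesis by (simp add: measure_notin_sets)
qed

lemma D_tail:
  fixes X :: "real \<Rightarrow> 'w \<Rightarrow> real"
  assumes P: "prob_space M"
    and Xm: "\<forall>t. X t \<in> borel_measurable M" and cad: "\<forall>\<omega>\<in>space M. cadlag (\<lambda>t. X t \<omega>)"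
    and l: "1 \<le> l" and a0: "0 \<le> a" and ab: "a < b" and c: "0 < c" and K0: "0 \<le> K"
    and K: "\<And>s. 0 \<le> s \<Longrightarrow> (\<integral>\<^sup>+\<omega>. ennreal (\<bar>X s \<omega>\<bar> powr l) \<partial>M) \<le> ennreal K"
  shows "\<exists>N E. N \<in> sets M \<and> E \<in> sets M \<and> measure M N = 0 \<and>
      measure M E \<le> \<bar>\<alpha>\<bar> powr l * K * (b - a) powr l / c powr l \<and>
      {\<omega>\<in>space M. c < \<bar>(- \<alpha> * integral {0..b} (\<lambda>s. X s \<omega>)) - (- \<alpha> * integral {0..a} (\<lambda>s. X s \<omega>))\<bar>} \<subseteq> N \<union> E"
proof -
  interpret prob_space M by fact
  define Y where "Y u v \<omega> = (\<integral>\<^sup>+s. ennreal (\<bar>X (max 0 s) \<omega>\<bar> powr l) * indicator {u..v} s \<partial>lborel)" for u v \<omega>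
  have Ym: "Y u v \<in> borel_measurable M" if "0 \<le> u" "u \<le> v" for u v
    unfolding Y_def using tonelli_bound(1)[OF P Xm cad that K] .
  have YE: "(\<integral>\<^sup>+\<omega>. Y u v \<omega> \<partial>M) \<le> ennreal (v - u) * ennreal K" if "0 \<le> u" "u \<le> v" for u v
    unfolding Y_def using tonelli_bound(2)[OF P Xm cad that K] .
  have Y0m[measurable]: "Y 0 b \<in> borel_measurable M" using a0 ab by (intro Ym) auto
  have Yabm[measurable]: "Y a b \<in> borel_measurable M" using a0 ab by (intro Ym) auto
  define N where "N = {\<omega>\<in>space M. Y 0 b \<omega> = \<infinity>}"
  have Ns: "N \<in> sets M" unfolding N_def by measurable
  have "(\<integral>\<^sup>+\<omega>. Y 0 b \<omega> \<partial>M) \<noteq> \<infinity>"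
  proof -
    have "(\<integral>\<^sup>+\<omega>. Y 0 b \<omega> \<partial>M) \<le> ennreal (b * K)"
      using YE[of 0 b] a0 ab K0 by (simp add: ennreal_mult)
    then show ?thesis by (auto simp: top_unique)
  qed
  then have "AE \<omega> in M. Y 0 b \<omega> \<noteq> \<infinity>" by (intro nn_integral_noteq_infinite) simp
  then have "emeasure M N = 0" using AE_iff_measurable[OF Ns, of "\<lambda>\<omega>. Y 0 b \<omega> \<noteq> \<infinity>"]
    unfolding N_def by simp
  then have N0: "measure M N = 0" by (simp add: measure_def)
  define \<kappa> where "\<kappa> = \<bar>\<alpha>\<bar> powr l * (b - a) powr (l - 1) / c powr l"
  have \<kappa>0: "0 \<le> \<kappa>" unfolding \<kappa>_def by simp
  define E where "E = {\<omega>\<in>space M. 1 \<le> ennreal \<kappa> * Y a b \<omega>}"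
  have Es: "E \<in> sets M" unfolding E_def by measurable
  have "emeasure M E \<le> ennreal \<kappa> * (\<integral>\<^sup>+\<omega>. Y a b \<omega> * indicator (space M) \<omega> \<partial>M)"
    unfolding E_def by (rule nn_integral_Markov_inequality) auto
  also have "(\<integral>\<^sup>+\<omega>. Y a b \<omega> * indicator (space M) \<omega> \<partial>M) = (\<integral>\<^sup>+\<omega>. Y a b \<omega> \<partial>M)"
    by (intro nn_integral_cong) auto
  also have "ennreal \<kappa> * \<dots> \<le> ennreal \<kappa> * (ennreal (b - a) * ennreal K)"
    using YE[of a b] a0 ab by (intro mult_left_mono) auto
  also have "\<dots> = ennreal (\<kappa> * (b - a) * K)"
    using \<kappa>0 ab K0 by (simp add: ennreal_mult mult.assoc)
  finally have "ennreal (measure M E) \<le> ennreal (\<kappa> * (b - a) * K)"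
    by (simp add: emeasure_eq_measure)
  then have "measure M E \<le> \<kappa> * (b - a) * K"
    using \<kappa>0 ab K0 by (simp add: ennreal_le_iff)
  also have "\<kappa> * (b - a) * K = \<bar>\<alpha>\<bar> powr l * K * (b - a) powr l / c powr l"
  proof -
    have eq: "(b - a) powr (l - 1) * (b - a) = (b - a) powr l" using ab by (simp add: powr_diff)
    have "\<kappa> * (b - a) * K = \<bar>\<alpha>\<bar> powr l * K * ((b - a) powr (l - 1) * (b - a)) / c powr l"
      unfolding \<kappa>_def by (simp add: mult_ac)
    then show ?thesis unfolding eq .
  qed
  finally have Eb: "measure M E \<le> \<bar>\<alpha>\<bar> powr l * K * (b - a) powr l / c powr l" .
  have incl: "{\<omega>\<in>space M. c < \<bar>(- \<alpha> * integral {0..b} (\<lambda>s. X s \<omega>)) - (- \<alpha> * integral {0..a} (\<lambda>s. X s \<omega>))\<bar>} \<subseteq> N \<union> E"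
  proof (intro subsetI)
    fix \<omega> assume H: "\<omega> \<in> {\<omega>\<in>space M. c < \<bar>(- \<alpha> * integral {0..b} (\<lambda>s. X s \<omega>)) - (- \<alpha> * integral {0..a} (\<lambda>s. X s \<omega>))\<bar>}"
    show "\<omega> \<in> N \<union> E"
    proof (cases "\<omega> \<in> N")
    case True then show ?thesis by simp
    next
    case False
    note nN = False
    from H have \<omega>: "\<omega> \<in> space M" and big: "c < \<bar>(- \<alpha> * integral {0..b} (\<lambda>s. X s \<omega>)) - (- \<alpha> * integral {0..a} (\<lambda>s. X s \<omega>))\<bar>"
      by auto
    define f where "f s = X (max 0 s) \<omega>" for s
    have fm: "f \<in> borel_measurable borel"
    proof -
      have "(\<lambda>s. X (max 0 (fst (s, \<omega>))) (snd (s, \<omega>))) \<in> borel_measurable lborel"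
        by (rule measurable_Pair1[OF joint_meas[OF Xm cad] \<omega>])
      then show ?thesis unfolding f_def by simp
    qed
    have int_eq: "integral {0..v} (\<lambda>s. X s \<omega>) = integral {0..v} f" for v
      by (intro integral_cong) (simp add: f_def)
    have fin: "(\<integral>\<^sup>+ s. ennreal (\<bar>f s\<bar> powr l) * indicator {0..b} s \<partial>lborel) < \<infinity>"
      using nN \<omega> by (simp add: N_def Y_def f_def less_top)
    have pb: "ennreal (\<bar>integral {0..b} f - integral {0..a} f\<bar> powr l) \<le> ennreal ((b - a) powr (l - 1)) * Y a b \<omega>"
      using path_bound[OF fm l a0 ab fin] by (simp add: Y_def f_def[abs_def])
    have "c < \<bar>\<alpha>\<bar> * \<bar>integral {0..b} f - integral {0..a} f\<bar>"
      using big by (simp add: int_eq abs_mult[symmetric] algebra_simps)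
    then have "c powr l < (\<bar>\<alpha>\<bar> * \<bar>integral {0..b} f - integral {0..a} f\<bar>) powr l"
      using c l by (intro powr_less_mono2) auto
    also have "\<dots> = \<bar>\<alpha>\<bar> powr l * \<bar>integral {0..b} f - integral {0..a} f\<bar> powr l"
      by (simp add: powr_mult)
    finally have "ennreal (c powr l) \<le> ennreal (\<bar>\<alpha>\<bar> powr l) * ennreal (\<bar>integral {0..b} f - integral {0..a} f\<bar> powr l)"
      by (simp add: ennreal_mult[symmetric] ennreal_leI)
    also have "\<dots> \<le> ennreal (\<bar>\<alpha>\<bar> powr l) * (ennreal ((b - a) powr (l - 1)) * Y a b \<omega>)"
      using pb by (rule mult_left_mono) simp
    finally have "ennreal (1 / c powr l) * ennreal (c powr l) \<le> ennreal (1 / c powr l) * (ennreal (\<bar>\<alpha>\<bar> powr l) * (ennreal ((b - a) powr (l - 1)) * Y a b \<omega>))"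
      by (rule mult_left_mono) simp
    moreover have "ennreal (1 / c powr l) * ennreal (c powr l) = 1"
      using c by (simp add: ennreal_mult[symmetric])
    moreover have "ennreal (1 / c powr l) * (ennreal (\<bar>\<alpha>\<bar> powr l) * (ennreal ((b - a) powr (l - 1)) * Y a b \<omega>)) = ennreal \<kappa> * Y a b \<omega>"
    proof -
      have "ennreal (1 / c powr l) * ennreal (\<bar>\<alpha>\<bar> powr l) * ennreal ((b - a) powr (l - 1))
          = ennreal (1 / c powr l * \<bar>\<alpha>\<bar> powr l * (b - a) powr (l - 1))"
        by (simp only: ennreal_mult[symmetric] divide_nonneg_nonneg powr_ge_zero zero_le_one mult_nonneg_nonneg)
      also have "1 / c powr l * \<bar>\<alpha>\<bar> powr l * (b - a) powr (l - 1) = \<kappa>"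
        unfolding \<kappa>_def by simp
      finally show ?thesis by (metis mult.assoc)
    qed
    ultimately have "1 \<le> ennreal \<kappa> * Y a b \<omega>" by simp
    then show ?thesis using \<omega> by (simp add: E_def)
    qed
  qed
  show ?thesis using Ns Es N0 Eb incl by blast
qed



lemma W_tail:
  fixes Z :: "'w \<Rightarrow> real"
  assumes P: "prob_space M" and D: "distributed M lborel Z (normal_density 0 (sqrt h))"
    and h: "0 < h" and c: "0 < c"
  shows "measure M {\<omega>\<in>space M. c < \<bar>Z \<omega>\<bar>} \<le> (fact (2*k) / (2^k * fact k)) * h^k / c^(2*k)"
proof -
  interpret prob_space M by fact
  have Zm[measurable]: "Z \<in> borel_measurable M"
    using distributed_measurable[OF D] by (simp add: measurable_lborel1)
  have mom: "has_bochner_integral lborel (\<lambda>x. normal_density 0 (sqrt h) x * x ^ (2 * k))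
      (fact (2*k) / (2^k * fact k) * h^k)"
  proof -
    have "has_bochner_integral lborel (\<lambda>x. normal_density 0 (sqrt h) x * (x - 0) ^ (2 * k))
      (fact (2 * k) / ((2 / (sqrt h)\<^sup>2)^k * fact k))" by (rule normal_moment_even) (simp add: h)
    moreover have "fact (2 * k) / ((2 / (sqrt h)\<^sup>2)^k * fact k) = fact (2*k) / (2^k * fact k) * h^k"
      using h by (simp add: power_divide field_simps)
    ultimately show ?thesis by simp
  qed
  have nn: "\<And>x. x \<in> space lborel \<Longrightarrow> 0 \<le> normal_density 0 (sqrt h) x"
    by (simp add: normal_density_nonneg)
  have int: "integrable M (\<lambda>\<omega>. Z \<omega> ^ (2*k))"
    using distributed_integrable[OF D _ nn, of "\<lambda>x. x^(2*k)"] integrable.intros[OF mom]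
    by simp
  have E: "(\<integral>\<omega>. Z \<omega> ^ (2*k) \<partial>M) = fact (2*k) / (2^k * fact k) * h^k"
    using distributed_integral[OF D _ nn, of "\<lambda>x. x^(2*k)"] has_bochner_integral_integral_eq[OF mom]
    by simp
  have cpos: "0 < c^(2*k)" using c by simp
  have "measure M {\<omega>\<in>space M. c < \<bar>Z \<omega>\<bar>} \<le> measure M {\<omega>\<in>space M. Z \<omega> ^ (2*k) \<ge> c^(2*k)}"
  proof (rule finite_measure_mono)
    show "{\<omega>\<in>space M. c < \<bar>Z \<omega>\<bar>} \<subseteq> {\<omega>\<in>space M. Z \<omega> ^ (2*k) \<ge> c^(2*k)}"
    proof safe
      fix \<omega> assume "c < \<bar>Z \<omega>\<bar>"
      then have "c^(2*k) \<le> \<bar>Z \<omega>\<bar>^(2*k)" using c by (intro power_mono) auto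
      then show "c^(2*k) \<le> Z \<omega> ^ (2*k)" using power_even_abs[of "2*k" "Z \<omega>"] by simp
    qed
  qed measurable
  also have "\<dots> \<le> (\<integral>\<omega>. Z \<omega> ^ (2*k) \<partial>M) / c^(2*k)"
    by (rule integral_Markov_inequality_measure[OF int, of "space M"]) (simp_all add: cpos zero_le_even_power)
  finally show ?thesis unfolding E .
qed



lemma arithW:
  fixes h D \<delta> ex mk :: real
  assumes h: "0 < h" "h \<le> D" and D: "D \<le> 1" and d: "0 < \<delta>" "\<delta> < 1/2"
    and ex: "ex \<le> 2 * \<delta> * real k" and mk: "0 \<le> mk"
  shows "mk * h ^ k / (D powr (1/2 - \<delta>) / 2) ^ (2 * k) \<le> mk * 4 ^ k * D powr ex"
proof -
  have D0: "0 < D" using h by simp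
  have c: "(D powr (1/2 - \<delta>) / 2) ^ (2 * k) = D powr (real k - 2 * \<delta> * real k) / 4 ^ k"
  proof -
    have "(D powr (1/2 - \<delta>) / 2) ^ (2 * k) = (D powr (1/2 - \<delta>)) ^ (2 * k) / 2 ^ (2 * k)"
      by (simp add: power_divide)
    also have "(D powr (1/2 - \<delta>)) ^ (2 * k) = D powr (real (2 * k) * (1/2 - \<delta>))"
      using D0 by (simp add: powr_power)
    also have "real (2 * k) * (1/2 - \<delta>) = real k - 2 * \<delta> * real k" by (simp add: algebra_simps)
    also have "(2::real) ^ (2 * k) = 4 ^ k" by (simp add: power_mult)
    finally show ?thesis .
  qed
  have hk: "h ^ k \<le> D powr real k" using h D0 by (simp add: powr_realpow power_mono)
  have "mk * h ^ k / (D powr (1/2 - \<delta>) / 2) ^ (2 * k) = mk * 4 ^ k * (h ^ k / D powr (real k - 2 * \<delta> * real k))"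
    unfolding c by simp
  also have "\<dots> \<le> mk * 4 ^ k * (D powr real k / D powr (real k - 2 * \<delta> * real k))"
    using hk mk by (intro mult_left_mono divide_right_mono) auto
  also have "D powr real k / D powr (real k - 2 * \<delta> * real k) = D powr (2 * \<delta> * real k)"
    by (simp add: powr_diff[symmetric])
  also have "D powr (2 * \<delta> * real k) \<le> D powr ex"
    using ex D D0 by (intro powr_mono') auto
  finally show ?thesis using mk by (simp add: mult_left_mono)
qed

lemma arithD:
  fixes h D \<delta> l A :: real
  assumes h: "0 < h" "h \<le> D" and d: "0 < \<delta>" "\<delta> < 1/2" and l: "1 \<le> l" and A: "0 \<le> A"
  shows "A * h powr l / (D powr (1/2 - \<delta>) / 2) powr l \<le> A * 2 powr l * D powr (l * (1/2 + \<delta>))"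
proof -
  have D0: "0 < D" using h by simp
  have c: "(D powr (1/2 - \<delta>) / 2) powr l = D powr ((1/2 - \<delta>) * l) / 2 powr l"
    by (simp add: powr_divide powr_powr)
  have hl: "h powr l \<le> D powr l" using h l by (intro powr_mono2) auto
  have "A * h powr l / (D powr (1/2 - \<delta>) / 2) powr l = A * 2 powr l * (h powr l / D powr ((1/2 - \<delta>) * l))"
    unfolding c by simp
  also have "\<dots> \<le> A * 2 powr l * (D powr l / D powr ((1/2 - \<delta>) * l))"
    using hl A by (intro mult_left_mono divide_right_mono) auto
  also have "D powr l / D powr ((1/2 - \<delta>) * l) = D powr (l * (1/2 + \<delta>))"
    by (simp add: powr_diff[symmetric] algebra_simps)
  finally show ?thesis .
qed



theorem lemma3p2:
  fixes M :: "'w measure"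
    and L W J X :: "real \<Rightarrow> 'w \<Rightarrow> real"
    and \<sigma> a l :: real
    and \<mu> :: "real measure"
    and tt :: "nat \<Rightarrow> nat \<Rightarrow> real"
  assumes P: "prob_space M"
    and scheme: "obs_scheme tt"
    and L_levy: "levy_process M L" and L_trip: "levy_triplet M L 0 (\<sigma>\<^sup>2) \<mu>"
    and W_bm: "brownian_motion M W"
    and J_levy: "levy_process M J" and J_trip: "levy_triplet M J 0 0 \<mu>"
    and WJ_indep: "prob_space.indep_var M
         (Pi\<^sub>M {0..} (\<lambda>_. borel)) (\<lambda>\<omega>. restrict (\<lambda>t. W t \<omega>) {0..})
         (Pi\<^sub>M {0..} (\<lambda>_. borel)) (\<lambda>\<omega>. restrict (\<lambda>t. J t \<omega>) {0..})"
    and L_decomp: "\<forall>t\<ge>0. \<forall>\<omega>\<in>space M. L t \<omega> = \<sigma> * W t \<omega> + J t \<omega>"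
    and X_meas: "\<forall>t. X t \<in> borel_measurable M"
    and X_cadlag: "\<forall>\<omega>\<in>space M. cadlag (\<lambda>t. X t \<omega>)"
    and X0_indep: "prob_space.indep_set M
         (sets (vimage_algebra (space M) (X 0) borel))
         (sets (vimage_algebra (space M) (\<lambda>\<omega>. restrict (\<lambda>t. L t \<omega>) {0..})
                 (Pi\<^sub>M {0..} (\<lambda>_. borel))))"
    and X_sde: "AE \<omega> in M. \<forall>t\<ge>0.
         X t \<omega> = X 0 \<omega> - a * integral {0..t} (\<lambda>s. X s \<omega>) + L t \<omega>"
    and l_ge: "l \<ge> 1"
    and moments: "(SUP s\<in>{0..}. \<integral>\<^sup>+ \<omega>. ennreal (\<bar>X s \<omega>\<bar> powr l) \<partial>M) < \<infinity>"
  shows "\<forall>\<delta>. 0 < \<delta> \<and> \<delta> < 1/2 \<longrightarrow>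
    (\<exists>C. \<forall>\<^sub>F n in sequentially. \<forall>i\<in>{1..n-1}.
       measure M {\<omega>\<in>space M.
          \<bar>(W (tt n (Suc i)) \<omega> - W (tt n i) \<omega>)
           + ((- a * integral {0..tt n (Suc i)} (\<lambda>s. X s \<omega>))
              - (- a * integral {0..tt n i} (\<lambda>s. X s \<omega>)))\<bar>
          > mesh tt n powr (1/2 - \<delta>)}
       \<le> C * mesh tt n powr (l * (1/2 + \<delta>)))"
proof (intro allI impI)
  fix \<delta> :: real assume \<delta>: "0 < \<delta> \<and> \<delta> < 1/2"
  then have d1: "0 < \<delta>" and d2: "\<delta> < 1/2" by auto
  interpret prob_space M by (rule P)
  define ex where "ex = l * (1/2 + \<delta>)"
  define k where "k = nat \<lceil>ex / (2 * \<delta>)\<rceil>"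
  have kge: "ex \<le> 2 * \<delta> * real k"
  proof -
    have "ex / (2 * \<delta>) \<le> real k" unfolding k_def by linarith
    then show ?thesis using d1 by (simp add: field_simps)
  qed
  define mk :: real where "mk = fact (2*k) / (2^k * fact k)"
  have mk0: "0 \<le> mk" unfolding mk_def by simp
  define Ks where "Ks = (SUP s\<in>{0..}. \<integral>\<^sup>+ \<omega>. ennreal (\<bar>X s \<omega>\<bar> powr l) \<partial>M)"
  have Ksf: "Ks < \<infinity>" using moments by (simp add: Ks_def)
  define K where "K = enn2real Ks"
  have K0: "0 \<le> K" by (simp add: K_def)
  have KK: "(\<integral>\<^sup>+\<omega>. ennreal (\<bar>X s \<omega>\<bar> powr l) \<partial>M) \<le> ennreal K" if "0 \<le> s" for s
  proof -
    have "(\<integral>\<^sup>+\<omega>. ennreal (\<bar>X s \<omega>\<bar> powr l) \<partial>M) \<le> Ks"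
      unfolding Ks_def using that by (intro SUP_upper) auto
    then show ?thesis using Ksf by (simp add: K_def)
  qed
  define C where "C = mk * 4 ^ k + \<bar>a\<bar> powr l * K * 2 powr l"
  have sch: "\<forall>n. tt n 0 = 0" "\<forall>n. \<forall>i<n. tt n i < tt n (Suc i)" "mesh tt \<longlonglongrightarrow> 0"
    using scheme unfolding obs_scheme_def by auto
  have ev1: "eventually (\<lambda>n. mesh tt n < 1) sequentially"
    using sch(3) by (rule order_tendstoD) simp
  have ev2: "eventually (\<lambda>n. 1 \<le> n) sequentially" by (rule eventually_ge_at_top)
  have tt0: "0 \<le> tt n i" if "i \<le> n" for n i
    using that
  proof (induction i)
    case 0 then show ?case using sch(1) by simp
  next
    case (Suc i) then show ?case using sch(2)[rule_format, of i n] by simp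
  qed
  have meshge: "tt n (Suc i) - tt n i \<le> mesh tt n" if "i < n" for n i
  proof -
    have fin: "finite {tt n (Suc i) - tt n i | i. i < n}" by simp
    show ?thesis unfolding mesh_def using that by (intro Max_ge[OF fin]) auto
  qed
  show "\<exists>C. \<forall>\<^sub>F n in sequentially. \<forall>i\<in>{1..n-1}.
       measure M {\<omega>\<in>space M.
          \<bar>(W (tt n (Suc i)) \<omega> - W (tt n i) \<omega>)
           + ((- a * integral {0..tt n (Suc i)} (\<lambda>s. X s \<omega>))
              - (- a * integral {0..tt n i} (\<lambda>s. X s \<omega>)))\<bar>
          > mesh tt n powr (1/2 - \<delta>)}
       \<le> C * mesh tt n powr (l * (1/2 + \<delta>))"
  proof (intro exI[of _ C])
    show "\<forall>\<^sub>F n in sequentially. \<forall>i\<in>{1..n-1}.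
       measure M {\<omega>\<in>space M.
          \<bar>(W (tt n (Suc i)) \<omega> - W (tt n i) \<omega>)
           + ((- a * integral {0..tt n (Suc i)} (\<lambda>s. X s \<omega>))
              - (- a * integral {0..tt n i} (\<lambda>s. X s \<omega>)))\<bar>
          > mesh tt n powr (1/2 - \<delta>)}
       \<le> C * mesh tt n powr (l * (1/2 + \<delta>))"
      using ev1 ev2
    proof eventually_elim
      case (elim n)
      show ?case
      proof
        fix i assume i: "i \<in> {1..n-1}"
        then have iN: "i < n" by auto
        define D where "D = mesh tt n"
        define ta where "ta = tt n i"
        define tb where "tb = tt n (Suc i)"
        have ta0: "0 \<le> ta" unfolding ta_def using iN by (intro tt0) simp
        have tab: "ta < tb" unfolding ta_def tb_def using sch(2) iN by blast
        have hD: "tb - ta \<le> D" unfolding ta_def tb_def D_def using meshge[OF iN] .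
        have D1: "D \<le> 1" using elim by (simp add: D_def)
        have h0: "0 < tb - ta" using tab by simp
        define c where "c = D powr (1/2 - \<delta>)"
        have c0: "0 < c" unfolding c_def using h0 hD by simp
        define Wset where "Wset = {\<omega>\<in>space M. c / 2 < \<bar>W tb \<omega> - W ta \<omega>\<bar>}"
        have Wm: "\<And>t. W t \<in> borel_measurable M" using W_bm unfolding brownian_motion_def by blast
        have Ws: "Wset \<in> sets M" unfolding Wset_def using Wm by measurable
        have Wdist: "distributed M lborel (\<lambda>\<omega>. W tb \<omega> - W ta \<omega>) (normal_density 0 (sqrt (tb - ta)))"
          using W_bm ta0 tab unfolding brownian_motion_def by blast
        have Wb: "measure M Wset \<le> mk * (tb - ta) ^ k / (c / 2) ^ (2 * k)"
          unfolding Wset_def mk_def using W_tail[OF P Wdist h0, of "c/2" k] c0 by simp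
        obtain N E where N: "N \<in> sets M" and E: "E \<in> sets M" and N0: "measure M N = 0"
          and Eb: "measure M E \<le> \<bar>a\<bar> powr l * K * (tb - ta) powr l / (c / 2) powr l"
          and incl: "{\<omega>\<in>space M. c / 2 < \<bar>(- a * integral {0..tb} (\<lambda>s. X s \<omega>)) - (- a * integral {0..ta} (\<lambda>s. X s \<omega>))\<bar>} \<subseteq> N \<union> E"
          using D_tail[OF P X_meas X_cadlag l_ge ta0 tab _ K0 KK, of "c/2" a] c0 by auto
        let ?A = "{\<omega>\<in>space M.
          \<bar>(W (tt n (Suc i)) \<omega> - W (tt n i) \<omega>)
           + ((- a * integral {0..tt n (Suc i)} (\<lambda>s. X s \<omega>))
              - (- a * integral {0..tt n i} (\<lambda>s. X s \<omega>)))\<bar>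
          > mesh tt n powr (1/2 - \<delta>)}"
        have Aincl: "?A \<subseteq> Wset \<union> N \<union> E"
        proof
          fix \<omega> assume "\<omega> \<in> ?A"
          then have \<omega>: "\<omega> \<in> space M" and big: "c < \<bar>(W tb \<omega> - W ta \<omega>) + ((- a * integral {0..tb} (\<lambda>s. X s \<omega>)) - (- a * integral {0..ta} (\<lambda>s. X s \<omega>)))\<bar>"
            by (auto simp: c_def D_def ta_def tb_def)
          show "\<omega> \<in> Wset \<union> N \<union> E"
          proof (cases "\<omega> \<in> Wset")
            case True then show ?thesis by simp
          next
            case False
            then have "\<bar>W tb \<omega> - W ta \<omega>\<bar> \<le> c / 2" using \<omega> by (simp add: Wset_def)
            then have "c / 2 < \<bar>(- a * integral {0..tb} (\<lambda>s. X s \<omega>)) - (- a * integral {0..ta} (\<lambda>s. X s \<omega>))\<bar>"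
              using big by linarith
            then show ?thesis using incl \<omega> by blast
          qed
        qed
        have "measure M ?A \<le> measure M Wset + measure M N + measure M E"
          by (rule cover3[OF _ Aincl Ws N E]) (simp add: finite_measure_axioms)
        also have "\<dots> \<le> mk * 4 ^ k * D powr ex + \<bar>a\<bar> powr l * K * 2 powr l * D powr ex"
        proof -
          have "measure M Wset \<le> mk * 4 ^ k * D powr ex"
            using Wb arithW[OF h0 hD D1 d1 d2 kge mk0] by (simp add: c_def)
          moreover have "measure M E \<le> \<bar>a\<bar> powr l * K * 2 powr l * D powr ex"
            using Eb arithD[OF h0 hD d1 d2 l_ge, of "\<bar>a\<bar> powr l * K"] K0 by (simp add: c_def ex_def)
          ultimately show ?thesis using N0 by simp
        qed
        also have "\<dots> = C * mesh tt n powr (l * (1/2 + \<delta>))"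
          by (simp add: C_def D_def ex_def algebra_simps)
        finally show "measure M ?A \<le> C * mesh tt n powr (l * (1/2 + \<delta>))" .
      qed
    qed
  qed
qed

end
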